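(* Let $p>3$ be a prime, $q=p^h$, and $a,b\in\mathbb{F}_{q^2}^*$. If $\deg\gcd(N_{a,b},D_{a,b})=1$, then $f_{a,b}(X)=X(1+aX^{q(q-1)}+bX^{2(q-1)})$ is not a permutation polynomial of $\mathbb{F}_{q^2}$.
   Context: A polynomial $f\in\mathbb{F}_{q^2}[X]$ is a permutation polynomial of $\mathbb{F}_{q^2}$ if $x\mapsto f(x)$ is a bijection of $\mathbb{F}_{q^2}$. $N_{a,b}(X)=a^qX^3+X^2+b^q$ and $D_{a,b}(X)=bX^3+X+a$. *)

theory Defs
  imports "HOL-Computational_Algebra.Computational_Algebra"
begin

definition permutation_polynomial :: "'a::field poly \<Rightarrow> bool" where
  "permutation_polynomial f \<longleftrightarrow> bij (poly f)"

definition N_poly :: "nat \<Rightarrow> 'a::field \<Rightarrow> 'a \<Rightarrow> 'a poly" where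
  "N_poly q a b = [:b ^ q, 0, 1, a ^ q:]"

definition D_poly :: "'a::field \<Rightarrow> 'a \<Rightarrow> 'a poly" where
  "D_poly a b = [:a, 1, 0, b:]"

definition f_poly :: "nat \<Rightarrow> 'a::field \<Rightarrow> 'a \<Rightarrow> 'a poly" where
  "f_poly q a b = [:0, 1:] * (1 + monom a (q * (q - 1)) + monom b (2 * (q - 1)))"

end

theory Submission
  imports Defs "HOL-Number_Theory.Residues"
begin

lemma polyN: "poly (N_poly q a b) x = b^q + x^2 + a^q * x^3"
  by (simp add: N_poly_def algebra_simps power2_eq_square power3_eq_cube)

lemma polyD: "poly (D_poly a b) x = a + x + b * x^3"
  by (simp add: D_poly_def algebra_simps power3_eq_cube)

lemma polyf: "poly (f_poly q a b) x = x * (1 + a * x^(q*(q-1)) + b * x^(2*(q-1)))"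
  by (simp add: f_poly_def poly_monom)

lemma fin_power_card:
  fixes x :: "'a :: {field, finite}"
  shows "x ^ card (UNIV :: 'a set) = x"
proof (cases "x = 0")
  case False
  have "x * (\<Prod>y\<in>UNIV-{0}. x * y) = x * x ^ (card (UNIV :: 'a set) - 1) * \<Prod>(UNIV-{0})"
    by (simp add: prod.distrib mult_ac)
  also have "x * x ^ (card (UNIV :: 'a set) - 1) = x ^ Suc (card (UNIV :: 'a set) - 1)"
    by (subst power_Suc) auto
  also have "Suc (card (UNIV :: 'a set) - 1) = card (UNIV :: 'a set)"
    using finite_UNIV_card_ge_0[where ?'a = 'a] by simp
  also have "(\<Prod>y\<in>UNIV-{0}. x * y) = (\<Prod>y\<in>UNIV-{0}. y)"
    by (rule prod.reindex_bij_witness[of _ "\<lambda>y. y / x" "\<lambda>y. x * y"]) (use False in auto)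
  finally show ?thesis
    by simp
qed (use finite_UNIV_card_ge_0[where ?'a = 'a] in auto)

lemma deg1_poly:
  fixes G :: "'a::field poly"
  assumes "degree G = 1"
  shows "poly G x = Polynomial.coeff G 0 + Polynomial.coeff G 1 * x" "Polynomial.coeff G 1 \<noteq> 0"
proof -
  show "poly G x = Polynomial.coeff G 0 + Polynomial.coeff G 1 * x"
    by (simp add: poly_altdef assms)
  show "Polynomial.coeff G 1 \<noteq> 0" using assms
    by (metis leading_coeff_0_iff zero_neq_one degree_0)
qed

theorem mainTheorem6:
  fixes p h q :: nat and a b :: "'a::{field_gcd,finite}"
  assumes "prime p" and "p > 3" and "h > 0" and "q = p ^ h"
    and "card (UNIV :: 'a set) = q ^ 2"
    and "a \<noteq> 0" and "b \<noteq> 0"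
    and "degree (gcd (N_poly q a b) (D_poly a b)) = 1"
  shows "\<not> permutation_polynomial (f_poly q a b)"
proof
  assume perm: "permutation_polynomial (f_poly q a b)"
  have card: "card (UNIV :: 'a set) = q ^ 2" by fact
  have "CHAR('a) > 0" by (rule finite_imp_CHAR_pos) simp
  hence pc: "prime CHAR('a)" by (rule prime_CHAR_semidom)
  have "CHAR('a) dvd p ^ (h * 2)"
    using CHAR_dvd_CARD[where 'a='a] card assms(4) by (simp add: power_mult)
  hence "CHAR('a) dvd p" using pc prime_dvd_power by blast
  hence cp: "CHAR('a) = p" using pc assms(1) primes_dvd_imp_eq by blast
  have frob: "\<And>u v::'a. (u + v) ^ q = u ^ q + v ^ q"
    using freshmans_dream'[OF pc, of q h] cp assms(4) by simp
  have ferm: "\<And>u::'a. u ^ q ^ 2 = u" using fin_power_card card by metis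
  have ferm2: "\<And>u::'a. (u ^ q) ^ q = u" using ferm by (simp add: power_mult[symmetric] power2_eq_square)
  have "p \<le> q" using assms(2,3,4) by (simp add: self_le_power)
  hence q5: "q \<ge> 4" using assms(2) by linarith
  define G where "G = gcd (N_poly q a b) (D_poly a b)"
  have dG: "degree G = 1" using assms(8) G_def by simp
  define r where "r = - Polynomial.coeff G 0 / Polynomial.coeff G 1"
  have Gr: "poly G r = 0" using deg1_poly[OF dG] r_def by simp
  have Guniq: "\<And>s. poly G s = 0 \<Longrightarrow> s = r"
  proof -
    fix s assume "poly G s = 0"
    hence "Polynomial.coeff G 0 + Polynomial.coeff G 1 * s = 0" using deg1_poly[OF dG] by simp
    thus "s = r" using deg1_poly(2)[OF dG] unfolding r_def by (simp add: eq_divide_eq add_eq_0_iff2)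
  qed
  have common: "\<And>s. poly (N_poly q a b) s = 0 \<Longrightarrow> poly (D_poly a b) s = 0 \<Longrightarrow> s = r"
  proof -
    fix s assume "poly (N_poly q a b) s = 0" "poly (D_poly a b) s = 0"
    hence "[:-s,1:] dvd G" unfolding G_def by (simp add: poly_eq_0_iff_dvd)
    thus "s = r" by (intro Guniq) (simp add: poly_eq_0_iff_dvd)
  qed
  have "G dvd N_poly q a b" "G dvd D_poly a b" unfolding G_def by simp_all
  hence "poly (N_poly q a b) r = 0" "poly (D_poly a b) r = 0"
    using Gr by (auto simp: dvd_def)
  hence Nr: "b^q + r^2 + a^q * r^3 = 0" and Dr: "a + r + b * r^3 = 0"
    by (simp_all only: polyN polyD)
  have r0: "r \<noteq> 0" using Dr assms(6) by auto
  define t where "t = r ^ q"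
  have t0: "t \<noteq> 0" using r0 t_def by simp
  have powsum: "\<And>u v w::'a. (u + v + w) ^ q = u^q + v^q + w^q" using frob by simp
  have pc2: "\<And>u::'a. \<And>m n. (u ^ m) ^ n = (u ^ n) ^ m" by (metis power_mult mult.commute)
  have "(b^q + r^2 + a^q * r^3) ^ q = 0" using Nr q5 by simp
  hence Nt: "b + t^2 + a * t^3 = 0"
    unfolding powsum power_mult_distrib ferm2 t_def by (simp only: pc2[of r])
  have "(a + r + b * r^3) ^ q = 0" using Dr q5 by simp
  hence Dt: "a^q + t + b^q * t^3 = 0"
    unfolding powsum power_mult_distrib t_def by (simp only: pc2[of r])
  define s where "s = inverse t"
  have ts: "t * s = 1" using t0 by (simp add: s_def)
  have e1: "t^3 * s = t^2" using ts by (simp add: power3_eq_cube power2_eq_square algebra_simps)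
  have e2: "t^3 * s^2 = t" using ts by (simp add: power3_eq_cube power2_eq_square algebra_simps)
  have e3: "t^3 * s^3 = 1" using ts by (metis power_mult_distrib power_one)
  have t3: "t^3 \<noteq> 0" using t0 by simp
  have "t^3 * (a + s + b * s^3) = a * t^3 + t^2 + b"
    by (simp add: distrib_left e1 mult.left_commute[of "t^3"] e3)
  also have "\<dots> = 0" using Nt by (simp add: ac_simps)
  finally have "a + s + b * s^3 = 0" using t3 by simp
  hence Ds: "poly (D_poly a b) s = 0" by (simp only: polyD)
  have "t^3 * (b^q + s^2 + a^q * s^3) = b^q * t^3 + t + a^q"
    by (simp add: distrib_left e2 mult.left_commute[of "t^3"] e3)
  also have "\<dots> = 0" using Dt by (simp add: ac_simps)
  finally have "b^q + s^2 + a^q * s^3 = 0" using t3 by simp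
  hence Ns: "poly (N_poly q a b) s = 0" by (simp only: polyN)
  have "s = r" using common Ns Ds by blast
  hence rt: "r ^ q = inverse r" using s_def t_def by (metis inverse_inverse_eq)
  define P where "P = Polynomial.monom (1::'a) q + [:0, r:]"
  have degP: "degree P = q" unfolding P_def using q5
    by (subst degree_add_eq_left) (auto simp: degree_monom_eq)
  hence P0: "P \<noteq> 0" using q5 by auto
  have "card {x. poly P x = 0} \<le> q" using card_poly_roots_bound[OF P0] degP by simp
  moreover have "q < q ^ 2" using q5 by (simp add: power2_eq_square)
  ultimately have "{x. poly P x = 0} \<noteq> UNIV" using card by force
  then obtain c where c: "poly P c \<noteq> 0" by blast
  hence c': "c ^ q + r * c \<noteq> 0" by (simp add: P_def poly_monom mult.commute)
  define x where "x = c + c ^ q / r"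
  have xr': "x * r = c^q + r * c" using r0 by (simp add: x_def distrib_right)
  have x0: "x \<noteq> 0" using c' xr' by auto
  have "x ^ q = c ^ q + (c ^ q / r) ^ q" using frob by (simp add: x_def)
  also have "(c ^ q / r) ^ q = (c ^ q) ^ q / r ^ q" by (rule power_divide)
  also have "\<dots> = c / inverse r" by (simp only: ferm2 rt)
  also have "\<dots> = c * r" by (simp only: divide_inverse inverse_inverse_eq)
  also have "c ^ q + c * r = r * x" using xr' by (simp add: mult.commute)
  finally have xq: "x ^ q = r * x" .
  obtain k where k: "q = Suc k" using q5 by (cases q) auto
  have "x ^ k * x = r * x" using xq k by (simp add: mult.commute)
  hence xr: "x ^ (q - 1) = r" using x0 k by simp
  have p1: "x ^ (q * (q - 1)) = r ^ q" by (simp only: mult.commute[of q] power_mult xr)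
  have p2: "x ^ (2 * (q - 1)) = r ^ 2" by (simp only: mult.commute[of 2] power_mult xr)
  have F: "poly (f_poly q a b) x = x * (1 + a * r ^ q + b * r ^ 2)"
    by (simp only: polyf p1 p2)
  have rr: "r * r ^ q = 1" using rt r0 by simp
  have "r * (1 + a * r ^ q + b * r ^ 2) = r + a * (r * r ^ q) + b * r ^ 3"
    by (simp add: algebra_simps power2_eq_square power3_eq_cube)
  also have "\<dots> = 0" using Dr rr by (simp add: ac_simps)
  finally have "1 + a * r ^ q + b * r ^ 2 = 0" using r0 by simp
  hence "poly (f_poly q a b) x = poly (f_poly q a b) 0" using F by (simp add: polyf)
  moreover have "inj (poly (f_poly q a b))" using perm unfolding permutation_polynomial_def by (rule bij_is_inj)
  ultimately show False using x0 by (meson injD)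
qed

end
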